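(* Let $\mathcal{A}=\mathbb{C}\setminus(-\infty,0]$ and let $H$ be the principal branch on $\mathcal{A}$ given by $H(z)=\ln\frac{z(1+z)}{1+z^2}\big/\ln\frac{1+z^2}{1+z}$ for $z\ne1$ and $H(1)=1$ (principal logarithm). For $z=re^{i\theta}\in\mathcal{A}$, the limit $\lim_{z\to0}\frac1{zH(z)}=0$ holds uniformly for $\theta\in[-\frac\pi2,\frac\pi2]$, and the limit $\lim_{z\to\infty}\frac1{z^2H(z)}=0$ holds uniformly for $\theta\in(-\pi,\pi)$.
   Context: $H$ is the holomorphic extension to $\mathcal{A}$ of $H(x)=\frac{\ln x}{\ln(x^2+1)-\ln(x+1)}-1$, $x\in(0,\infty)$. *)

theory Defs
  imports "HOL-Analysis.Analysis"
begin

definition slitA :: "complex set" where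
  "slitA = - complex_of_real ` {..0}"

definition Hfun :: "complex \<Rightarrow> complex" where
  "Hfun z = (if z = 1 then 1
             else Ln (z * (1 + z) / (1 + z\<^sup>2)) / Ln ((1 + z\<^sup>2) / (1 + z)))"

end

theory Submission imports Defs begin

lemma inv_mult_div: "1 / (a * (N / D)) = (D::complex) / (a * N)"
  by (cases "D = 0"; cases "N = 0"; cases "a = 0") (auto simp: field_simps)

lemma small:
  fixes z :: complex
  assumes nz: "norm z = r" and r0: "0 < r" and r1: "r \<le> 1/4"
  shows "norm (1/(z*Hfun z)) \<le> 4 / (- ln (2*r))"
proof -
  have z1: "z \<noteq> 1" using nz r1 by auto
  define w where "w = z*(1+z)/(1+z^2)"
  define t where "t = (z^2 - z)/(1+z)"
  have n1z: "norm (1+z) \<ge> 1 - r" using norm_triangle_ineq[of "1+z" "-z"] nz by simp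
  have n1z2: "norm (1+z) \<le> 1 + r" using norm_triangle_ineq[of 1 z] nz by simp
  have n1zz: "norm (1+z^2) \<ge> 1 - r^2" using norm_triangle_ineq[of "1+z^2" "-(z^2)"] nz by (simp add: norm_power)
  have rr: "r^2 < 1" proof -
    have "r*r \<le> r*(1/4)" using r1 r0 by (intro mult_left_mono) auto
    then show ?thesis using r1 by (simp add: power2_eq_square)
  qed
  have nz0: "1 + z \<noteq> 0" "1 + z^2 \<noteq> 0" using n1z n1zz r1 rr by auto
  have z0: "z \<noteq> 0" using nz r0 by auto
  have w0: "w \<noteq> 0" using z0 nz0 by (simp add: w_def)
  have "norm w = r * norm (1+z) / norm (1+z^2)" by (simp add: w_def norm_mult norm_divide nz)
  also have "\<dots> \<le> r * (1+r) / (1 - r^2)"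
    using n1z2 n1zz r0 rr by (intro frac_le mult_left_mono) auto
  also have "\<dots> = r / (1 - r)" using rr r1 by (simp add: power2_eq_square field_simps)
  also have "\<dots> \<le> 2 * r" using r0 r1 by (simp add: field_simps)
  finally have nw: "norm w \<le> 2*r" .
  have lr: "ln (2*r) < 0" using r0 r1 by simp
  have nw0: "0 < norm w" using w0 by simp
  have "- ln (2*r) \<le> - ln (norm w)" using nw nw0 ln_le_cancel_iff[of "norm w" "2*r"] r0 by simp
  also have "- ln (norm w) \<le> norm (Ln w)"
    using abs_Re_le_cmod[of "Ln w"] w0 by simp
  finally have NN: "- ln (2*r) \<le> norm (Ln w)" .
  have u: "(1+z^2)/(1+z) = 1 + t" using nz0 by (simp add: t_def field_simps power2_eq_square)
  have "norm t = norm (z^2 - z) / norm (1+z)" by (simp add: t_def norm_divide)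
  also have "\<dots> \<le> (r^2 + r) / (1 - r)"
    using n1z r1 norm_triangle_ineq4[of "z^2" z] nz
    by (intro frac_le) (auto simp: norm_power)
  also have "\<dots> \<le> 5/3 * r" using r0 r1 by (simp add: field_simps power2_eq_square)
  finally have nt: "norm t \<le> 5/3*r" .
  have DD: "norm (Ln (1 + t)) \<le> 4 * r"
    proof -
    have "norm t < 1/2" using nt r1 by linarith
    then show ?thesis using norm_Ln_le[of t] nt r0 by linarith
  qed
  have "norm (1/(z*Hfun z)) = norm (Ln (1+t)) / (r * norm (Ln w))"
    using z1 by (simp add: Hfun_def inv_mult_div u w_def norm_divide norm_mult nz)
  also have "\<dots> \<le> (4*r) / (r * (- ln (2*r)))"
    using DD NN lr r0 mult_pos_neg[OF r0 lr] by (intro frac_le mult_left_mono) auto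
  also have "\<dots> = 4 / (- ln (2*r))" using r0 by simp
  finally show ?thesis .
qed

lemma ln_sqrt_bound:
  assumes "r \<ge> 4" shows "ln (2*r) + pi \<le> 5 * sqrt r"
proof -
  have s2: "sqrt 2 \<le> 3/2" by (rule real_le_lsqrt) (auto simp: power2_eq_square)
  have sr: "sqrt r \<ge> 2" using assms real_sqrt_le_mono[of 4 r] by simp
  have "ln (2*r) = 2 * ln (sqrt (2*r))" using assms by (simp add: ln_sqrt)
  also have "ln (sqrt (2*r)) \<le> sqrt (2*r) - 1" using assms by (intro ln_le_minus_one) auto
  also have "sqrt (2*r) = sqrt 2 * sqrt r" by (simp add: real_sqrt_mult)
  finally have "ln (2*r) \<le> 2 * (sqrt 2 * sqrt r - 1)" by simp
  moreover have "sqrt 2 * sqrt r \<le> 3/2 * sqrt r" using s2 assms by (intro mult_right_mono) auto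
  ultimately have "ln (2*r) \<le> 3 * sqrt r - 2" by (simp add: algebra_simps)
  then show ?thesis using pi_less_4 sr by linarith
qed

lemma large:
  fixes z :: complex
  assumes nz: "norm z = r" and r4: "r \<ge> 4"
  shows "norm (1/(z^2*Hfun z)) \<le> 40 / sqrt r"
proof -
  have z1: "z \<noteq> 1" using nz r4 by auto
  define t where "t = (z - 1)/(1+z^2)"
  define u where "u = (1+z^2)/(1+z)"
  have n1z: "norm (1+z) \<ge> r - 1" using norm_triangle_ineq[of "1+z" "-1"] nz by simp
  have n1z2: "norm (1+z) \<le> r + 1" using norm_triangle_ineq[of 1 z] nz by simp
  have nzm1: "norm (z-1) \<ge> r - 1" using norm_triangle_ineq[of "z-1" "1"] nz by simp
  have nzm2: "norm (z-1) \<le> r + 1" using norm_triangle_ineq4[of z 1] nz by simp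
  have n1zz: "norm (1+z^2) \<ge> r^2 - 1" using norm_triangle_ineq[of "1+z^2" "-1"] nz by (simp add: norm_power)
  have n1zz2: "norm (1+z^2) \<le> r^2 + 1" using norm_triangle_ineq[of 1 "z^2"] nz by (simp add: norm_power)
  have rr: "r^2 \<ge> 16" using r4 power_mono[of 4 r 2] by simp
  have nz0: "1 + z \<noteq> 0" "1 + z^2 \<noteq> 0" using n1z n1zz r4 rr by auto
  have w: "z*(1+z)/(1+z^2) = 1 + t" using nz0 by (simp add: t_def field_simps power2_eq_square)
  have "norm t = norm (z-1) / norm (1+z^2)" by (simp add: t_def norm_divide)
  also have "\<dots> \<le> (r+1)/(r^2-1)" using nzm2 n1zz rr r4 by (intro frac_le) auto
  also have "\<dots> = 1/(r-1)"
  proof -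
    have "r^2 - 1 = (r+1)*(r-1)" by (simp add: power2_eq_square algebra_simps)
    then show ?thesis using r4 by simp
  qed
  also have "\<dots> \<le> 1/3" using r4 by (simp add: field_simps)
  finally have nt: "norm t \<le> 1/3" .
  have "(r-1)/(r^2+1) \<le> norm (z-1) / norm (1+z^2)" using nzm1 n1zz2 rr r4 n1zz by (intro frac_le) auto
  hence ntl: "(r-1)/(r^2+1) \<le> norm t" by (simp add: t_def norm_divide)
  have "norm (Ln (1+t) - t) \<le> norm t^2/(1 - norm t)" using Ln_approx_linear[of t] nt by simp
  also have "\<dots> \<le> norm t / 2"
  proof -
    have "norm t * norm t \<le> norm t * (1/3)" using nt by (intro mult_left_mono) auto
    then show ?thesis using nt by (simp add: field_simps power2_eq_square)
  qed
  finally have "norm (Ln (1+t) - t) \<le> norm t / 2" .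
  hence NN: "norm (Ln (1+t)) \<ge> (r-1)/(2*(r^2+1))"
  proof -
    have e: "(r-1)/(2*(r^2+1)) = ((r-1)/(r^2+1))/2" by simp
    have "norm t - norm (Ln (1+t)) \<le> norm (Ln (1+t) - t)"
      using norm_triangle_ineq2[of t "Ln (1+t)"] by (simp add: norm_minus_commute)
    then have "norm t / 2 \<le> norm (Ln (1+t))" using \<open>norm (Ln (1+t) - t) \<le> norm t / 2\<close> by linarith
    moreover have "((r-1)/(r^2+1))/2 \<le> norm t / 2" using ntl by (rule divide_right_mono) auto
    ultimately show ?thesis unfolding e by linarith
  qed
  have u0: "u \<noteq> 0" using nz0 by (simp add: u_def)
  have "norm u = norm (1+z^2) / norm (1+z)" by (simp add: u_def norm_divide)
  also have "\<dots> \<le> (r^2+1)/(r-1)" using n1zz2 n1z r4 by (intro frac_le) auto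
  also have "\<dots> \<le> 2*r" 
  proof -
    have "4*r \<le> r*r" using r4 by (intro mult_right_mono) auto
    have "2*r*(r-1) - (r^2+1) = r*r - 2*r - 1" by (simp add: power2_eq_square algebra_simps)
    then have "r^2 + 1 \<le> 2*r*(r-1)" using r4 \<open>4*r \<le> r*r\<close> by linarith
    then show ?thesis using r4 by (simp add: divide_le_eq)
  qed
  finally have nu: "norm u \<le> 2*r" .
  have "r - 1 \<le> (r^2-1)/(r+1)" using r4 by (simp add: field_simps power2_eq_square)
  also have "\<dots> \<le> norm (1+z^2) / norm (1+z)" using n1zz n1z2 r4 rr nz0 by (intro frac_le) auto
  finally have nul: "norm u \<ge> 1" using r4 by (simp add: u_def norm_divide)
  have "norm (Ln u) \<le> \<bar>Re (Ln u)\<bar> + \<bar>Im (Ln u)\<bar>" by (rule cmod_le)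
  also have "\<bar>Re (Ln u)\<bar> = ln (norm u)" using u0 nul by simp
  also have "ln (norm u) \<le> ln (2*r)" using nu u0 r4 by simp
  also have "\<bar>Im (Ln u)\<bar> \<le> pi" using u0 Im_Ln_le_pi[of u] mpi_less_Im_Ln[of u] by auto
  finally have DD: "norm (Ln u) \<le> 5 * sqrt r" using ln_sqrt_bound[OF r4] by linarith
  have Npos: "0 < (r-1)/(2*(r^2+1))" using r4 by (simp add: add_pos_nonneg)
  have "norm (1/(z^2*Hfun z)) = norm (Ln u) / (r^2 * norm (Ln (1+t)))"
    using z1 by (simp add: Hfun_def inv_mult_div u_def w norm_divide norm_mult nz norm_power)
  also have "\<dots> \<le> (5 * sqrt r) / (r^2 * ((r-1)/(2*(r^2+1))))"
    using DD NN r4 Npos mult_pos_pos[of "r^2" "(r-1)/(2*(r^2+1))"] rr by (intro frac_le mult_left_mono) auto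
  also have "\<dots> = 10 * sqrt r * ((r^2+1)/(r^2*(r-1)))" using r4 by (simp add: field_simps)
  also have "\<dots> \<le> 10 * sqrt r * (4/r)"
  proof -
    have "(r^2+1)/(r^2*(r-1)) \<le> 4/r" using r4 rr
      
    proof -
      have a: "4*(r*r) \<le> r*(r*r)" using r4 by (intro mult_right_mono) auto
      have b: "4*r \<le> r*r" using r4 by (intro mult_right_mono) auto
      have e: "4*(r^2*(r-1)) - (r^2+1)*r = 3*(r*(r*r)) - 4*(r*r) - r"
        by (simp add: power2_eq_square algebra_simps)
      have "(r^2+1)*r \<le> 4*(r^2*(r-1))" using a b e r4 by linarith
      moreover have "r^2*(r-1) > 0" using r4 by simp
      ultimately show ?thesis using r4 by (simp add: divide_le_eq le_divide_eq mult.commute)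
    qed
    then show ?thesis using r4 by (intro mult_left_mono) auto
  qed
  also have "\<dots> = 40 / sqrt r" using r4
    by (simp add: field_simps)
  finally show ?thesis .
qed


lemma slit:
  assumes "0 < r" "-pi < \<theta>" "\<theta> < pi"
  shows "complex_of_real r * cis \<theta> \<in> slitA"
unfolding slitA_def
proof
  assume "complex_of_real r * cis \<theta> \<in> complex_of_real ` {..0}"
  then obtain x where x: "x \<le> 0" "complex_of_real r * cis \<theta> = complex_of_real x"
    by auto
  hence "Im (complex_of_real r * cis \<theta>) = 0" "Re (complex_of_real r * cis \<theta>) = x" by simp_all
  hence "r * sin \<theta> = 0" "r * cos \<theta> = x" by simp_all
  hence "sin \<theta> = 0" using assms by simp
  hence "\<theta> = 0" using sin_zero_pi_iff[of \<theta>] assms by auto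
  thus False using \<open>r * cos \<theta> = x\<close> x assms by simp
qed

lemma nrm: "0 < r \<Longrightarrow> norm (complex_of_real r * cis \<theta>) = r"
  by (simp add: norm_mult)

theorem lemma4p4:
  shows "(\<forall>\<epsilon>>0. \<exists>\<delta>>0. \<forall>r \<theta>. 0 < r \<and> r < \<delta> \<and> \<theta> \<in> {-(pi/2)..pi/2} \<longrightarrow>
            (let z = complex_of_real r * cis \<theta> in z \<in> slitA \<and> norm (1 / (z * Hfun z)) < \<epsilon>))
       \<and> (\<forall>\<epsilon>>0. \<exists>R>0. \<forall>r \<theta>. r > R \<and> \<theta> \<in> {-pi<..<pi} \<longrightarrow>
            (let z = complex_of_real r * cis \<theta> in z \<in> slitA \<and> norm (1 / (z\<^sup>2 * Hfun z)) < \<epsilon>))"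
proof (intro conjI allI impI)
  fix \<epsilon> :: real assume e: "\<epsilon> > 0"
  define \<delta> where "\<delta> = min (1/4) (exp (-4/\<epsilon>)/2)"
  show "\<exists>\<delta>>0. \<forall>r \<theta>. 0 < r \<and> r < \<delta> \<and> \<theta> \<in> {-(pi/2)..pi/2} \<longrightarrow>
            (let z = complex_of_real r * cis \<theta> in z \<in> slitA \<and> norm (1 / (z * Hfun z)) < \<epsilon>)"
  proof (intro exI conjI allI impI)
    show "\<delta> > 0" by (simp add: \<delta>_def)
    fix r \<theta> assume h: "0 < r \<and> r < \<delta> \<and> \<theta> \<in> {-(pi/2)..pi/2}"
    have r0: "0 < r" and r1: "r \<le> 1/4" and r2: "2*r < exp (-4/\<epsilon>)" using h by (auto simp: \<delta>_def)
    have "-(pi/2) \<le> \<theta>" "\<theta> \<le> pi/2" using h by auto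
    hence th: "-pi < \<theta>" "\<theta> < pi" using pi_gt_zero by linarith+
    have "ln (2*r) < -4/\<epsilon>" using r2 r0 ln_less_cancel_iff[of "2*r" "exp(-4/\<epsilon>)"] by simp
    hence l: "4/\<epsilon> < - ln (2*r)" by linarith
    have "4/(- ln (2*r)) < \<epsilon>" using l e
      by (smt (verit) divide_pos_pos frac_less2 nonzero_mult_div_cancel_left divide_divide_eq_right mult.commute)
    moreover have "norm (1/((complex_of_real r * cis \<theta>) * Hfun (complex_of_real r * cis \<theta>))) \<le> 4/(- ln (2*r))"
      by (rule small[OF nrm[OF r0] r0 r1])
    ultimately show "let z = complex_of_real r * cis \<theta> in z \<in> slitA \<and> norm (1 / (z * Hfun z)) < \<epsilon>"
      using slit[OF r0 th] by (simp add: Let_def)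
  qed
next
  fix \<epsilon> :: real assume e: "\<epsilon> > 0"
  define R where "R = max 4 ((40/\<epsilon>)^2)"
  show "\<exists>R>0. \<forall>r \<theta>. r > R \<and> \<theta> \<in> {-pi<..<pi} \<longrightarrow>
            (let z = complex_of_real r * cis \<theta> in z \<in> slitA \<and> norm (1 / (z\<^sup>2 * Hfun z)) < \<epsilon>)"
  proof (intro exI conjI allI impI)
    show "R > 0" by (simp add: R_def)
    fix r \<theta> assume h: "r > R \<and> \<theta> \<in> {-pi<..<pi}"
    have r4: "r \<ge> 4" and rb: "(40/\<epsilon>)^2 < r" using h by (auto simp: R_def)
    have r0: "0 < r" using r4 by simp
    have th: "-pi < \<theta>" "\<theta> < pi" using h by auto
    have "40/\<epsilon> < sqrt r" using rb e real_less_rsqrt by blast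
    hence "40 < \<epsilon> * sqrt r" using e by (simp add: divide_less_eq mult.commute)
    hence "40 / sqrt r < \<epsilon>" using r0 by (simp add: divide_less_eq)
    moreover have "norm (1/((complex_of_real r * cis \<theta>)^2 * Hfun (complex_of_real r * cis \<theta>))) \<le> 40 / sqrt r"
      by (rule large[OF nrm[OF r0] r4])
    ultimately show "let z = complex_of_real r * cis \<theta> in z \<in> slitA \<and> norm (1 / (z\<^sup>2 * Hfun z)) < \<epsilon>"
      using slit[OF r0 th] by (simp add: Let_def)
  qed
qed

end
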